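(* Let $\alpha\in\mathbb R$, $k\in\mathbb Z$, and consider $\widehat\Delta_k=\partial_x^2-\frac{\alpha}{x}\partial_x-k^2|x|^{2\alpha}$ on $(-\infty,0)\cup(0,\infty)$ with weight $|x|^{-\alpha}$. Then the endpoints $+\infty$ and $-\infty$ are limit-point for every $k$. Regarding $0^+$ and $0^-$: (1) if $\alpha\le-3$ or $\alpha\ge1$, they are limit-point for every $k$; (2) if $-3<\alpha\le-1$, they are limit-circle for $k=0$ and limit-point for $k\ne0$; (3) if $-1<\alpha<1$, they are limit-circle for every $k$.
   Context: An endpoint $a$ of one of the intervals $(-\infty,0)$, $(0,\infty)$ (namely $-\infty,0^-,0^+,+\infty$) is limit-circle for $\widehat\Delta_k$ if every solution $u$ of $\widehat\Delta_ku=0$ on that interval belongs to $L^2(I_a,|x|^{-\alpha}dx)$ for some (equivalently any) subinterval $I_a$ of the form $(a,d)$ or $(d,a)$ with one endpoint equal to $a$; otherwise $a$ is limit-point. *)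

theory Defs
  imports "HOL-Analysis.Analysis"
begin

datatype endpoint = NegInf | ZeroMinus | ZeroPlus | PosInf

definition ep_interval :: "endpoint \<Rightarrow> real set" where
  "ep_interval a = (if a = NegInf \<or> a = ZeroMinus then {..<0} else {0<..})"

fun ep_subinterval :: "endpoint \<Rightarrow> real \<Rightarrow> real set" where
  "ep_subinterval NegInf d = {..<d}"
| "ep_subinterval ZeroMinus d = {d<..<0}"
| "ep_subinterval ZeroPlus d = {0<..<d}"
| "ep_subinterval PosInf d = {d<..}"

definition is_solution :: "real \<Rightarrow> int \<Rightarrow> real set \<Rightarrow> (real \<Rightarrow> real) \<Rightarrow> bool" where
  "is_solution \<alpha> k I u \<longleftrightarrow> (\<exists>u' u''. \<forall>x\<in>I.
      (u has_real_derivative u' x) (at x) \<and>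
      (u' has_real_derivative u'' x) (at x) \<and>
      u'' x - (\<alpha> / x) * u' x - (real_of_int k)^2 * \<bar>x\<bar> powr (2 * \<alpha>) * u x = 0)"

definition L2_near :: "real \<Rightarrow> endpoint \<Rightarrow> (real \<Rightarrow> real) \<Rightarrow> bool" where
  "L2_near \<alpha> a u \<longleftrightarrow> (\<exists>d\<in>ep_interval a.
      set_integrable lborel (ep_subinterval a d) (\<lambda>x. (u x)^2 * \<bar>x\<bar> powr (- \<alpha>)))"

definition limit_circle :: "real \<Rightarrow> int \<Rightarrow> endpoint \<Rightarrow> bool" where
  "limit_circle \<alpha> k a \<longleftrightarrow>
     (\<forall>u. is_solution \<alpha> k (ep_interval a) u \<longrightarrow> L2_near \<alpha> a u)"

definition limit_point :: "real \<Rightarrow> int \<Rightarrow> endpoint \<Rightarrow> bool" where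
  "limit_point \<alpha> k a \<longleftrightarrow> \<not> limit_circle \<alpha> k a"

end

theory Submission
  imports Defs "HOL-Analysis.Gamma_Function"
begin


lemma int_bound:
  fixes f g :: "real \<Rightarrow> real"
  assumes "set_integrable lborel S g" "S \<in> sets borel" "continuous_on S f"
    "\<And>x. x \<in> S \<Longrightarrow> \<bar>f x\<bar> \<le> g x"
  shows "set_integrable lborel S f"
proof (rule set_integrable_bound[OF assms(1)])
  show "set_borel_measurable lborel S f"
    unfolding set_borel_measurable_def
    using borel_measurable_continuous_on_indicator[OF assms(2,3)] by simp
  show "AE x in lborel. x \<in> S \<longrightarrow> norm (f x) \<le> norm (g x)"
    using assms(4) by (auto intro!: AE_I2 order_trans[OF _ abs_ge_self])
qed

lemma not_int_bound:
  fixes f g :: "real \<Rightarrow> real"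
  assumes "\<not> set_integrable lborel S g" "S \<in> sets borel" "continuous_on S g"
    "\<And>x. x \<in> S \<Longrightarrow> \<bar>g x\<bar> \<le> f x"
  shows "\<not> set_integrable lborel S f"
  using int_bound[OF _ assms(2,3,4)] assms(1) by blast

lemma sint_to_hk:
  fixes f :: "real \<Rightarrow> real"
  assumes "set_integrable lborel S f" "S \<in> sets borel"
  shows "f integrable_on S"
proof -
  have "set_integrable lebesgue S f"
    using assms unfolding set_integrable_def
    by (simp add: integrable_completion borel_measurable_integrable)
  then show ?thesis using set_lebesgue_integral_eq_integral(1) by blast
qed

lemma inv_not_int0:
  assumes "d > 0"
  shows "\<not> set_integrable lborel {0<..<d} (\<lambda>x::real. 1 / x)"
proof
  assume si: "set_integrable lborel {0<..<d} (\<lambda>x::real. 1 / x)"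
  hence I: "(\<lambda>x::real. 1/x) integrable_on {0<..<d}" by (intro sint_to_hk) auto
  define I where "I = integral {0<..<d} (\<lambda>x::real. 1/x)"
  define e where "e = (d/2) * exp (-(\<bar>I\<bar>+1))"
  have e0: "e > 0" using assms by (simp add: e_def)
  have "exp (-(\<bar>I\<bar>+1)) < 1" by simp
  hence ed: "e < d/2" using assms unfolding e_def by (simp add: mult_less_cancel_left1)
  have "((\<lambda>x::real. 1/x) has_integral (ln (d/2) - ln e)) {e..d/2}"
  proof (rule fundamental_theorem_of_calculus)
    show "e \<le> d/2" using ed by simp
    fix x assume "x \<in> {e..d/2}"
    hence "x > 0" using e0 by auto
    thus "(ln has_vector_derivative 1/x) (at x within {e..d/2})"
      by (auto intro!: derivative_eq_intros simp: has_real_derivative_iff_has_vector_derivative[symmetric])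
  qed
  moreover have "integral {e..d/2} (\<lambda>x::real. 1/x) \<le> I"
    unfolding I_def
    by (rule integral_subset_le) (use e0 ed I calculation in auto)
  moreover have "ln (d/2) - ln e = \<bar>I\<bar> + 1"
  proof -
    have "ln e = ln (d/2) + ln (exp (-(\<bar>I\<bar>+1)))" unfolding e_def by (rule ln_mult_pos) (use assms in auto)
    thus ?thesis by simp
  qed
  ultimately show False by (simp add: integral_unique)
qed

lemma inv_not_int_inf:
  assumes "d > 0"
  shows "\<not> set_integrable lborel {d<..} (\<lambda>x::real. 1 / x)"
proof
  assume si: "set_integrable lborel {d<..} (\<lambda>x::real. 1 / x)"
  hence I: "(\<lambda>x::real. 1/x) integrable_on {d<..}" by (intro sint_to_hk) auto
  define I where "I = integral {d<..} (\<lambda>x::real. 1/x)"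
  define e where "e = (2*d) * exp ((\<bar>I\<bar>+1))"
  have "exp (\<bar>I\<bar>+1) > 1" by (simp add: add_pos_nonneg)
  hence ed: "e > 2*d" using assms unfolding e_def by simp
  have "((\<lambda>x::real. 1/x) has_integral (ln e - ln (2*d))) {2*d..e}"
  proof (rule fundamental_theorem_of_calculus)
    show "2*d \<le> e" using ed by simp
    fix x assume "x \<in> {2*d..e}"
    hence "x > 0" using assms by auto
    thus "(ln has_vector_derivative 1/x) (at x within {2*d..e})"
      by (auto intro!: derivative_eq_intros simp: has_real_derivative_iff_has_vector_derivative[symmetric])
  qed
  moreover have "integral {2*d..e} (\<lambda>x::real. 1/x) \<le> I"
    unfolding I_def
    by (rule integral_subset_le) (use assms ed I calculation in auto)
  moreover have "ln e - ln (2*d) = \<bar>I\<bar> + 1"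
    using assms unfolding e_def by (simp add: ln_mult)
  ultimately show False by (simp add: integral_unique)
qed



lemma powr_not_int0:
  assumes "p \<le> -1" "d > 0" "c > 0"
  shows "\<not> set_integrable lborel {0<..<d} (\<lambda>x::real. c * x powr p)"
proof (rule not_int_bound[where g = "\<lambda>x. (c * d powr (p+1)) * (1/x)"])
  have K: "c * d powr (p+1) \<noteq> 0" using assms by simp
  show "\<not> set_integrable lborel {0<..<d} (\<lambda>x. (c * d powr (p+1)) * (1/x))"
    using inv_not_int0[OF assms(2)] set_integrable_mult_right_iff[OF K, of lborel "{0<..<d}" "\<lambda>x. 1/x"] by blast
  show "continuous_on {0<..<d} (\<lambda>x. (c * d powr (p+1)) * (1/x))"
    by (intro continuous_intros) auto
  fix x assume x: "x \<in> {0<..<d}"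
  have "d powr (p+1) \<le> x powr (p+1)" using x assms by (intro powr_mono2') auto
  hence "c * d powr (p+1) * (1/x) \<le> c * x powr (p+1) * (1/x)"
    using x assms by (intro mult_right_mono mult_left_mono) auto
  moreover have "x powr (p+1) * (1/x) = x powr p" using x by (simp add: powr_add)
  hence "c * x powr (p+1) * (1/x) = c * x powr p" by (simp only: mult.assoc)
  moreover have "\<bar>c * d powr (p+1) * (1/x)\<bar> = c * d powr (p+1) * (1/x)" using x assms by auto
  ultimately show "\<bar>c * d powr (p+1) * (1/x)\<bar> \<le> c * x powr p" by (smt (verit))
qed auto

lemma powr_not_int_inf:
  assumes "p \<ge> -1" "d > 0" "c > 0"
  shows "\<not> set_integrable lborel {d<..} (\<lambda>x::real. c * x powr p)"
proof (rule not_int_bound[where g = "\<lambda>x. (c * d powr (p+1)) * (1/x)"])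
  have K: "c * d powr (p+1) \<noteq> 0" using assms by simp
  show "\<not> set_integrable lborel {d<..} (\<lambda>x. (c * d powr (p+1)) * (1/x))"
    using inv_not_int_inf[OF assms(2)] set_integrable_mult_right_iff[OF K, of lborel "{d<..}" "\<lambda>x. 1/x"] by blast
  show "continuous_on {d<..} (\<lambda>x. (c * d powr (p+1)) * (1/x))"
    using assms by (intro continuous_intros) auto
  fix x assume x: "x \<in> {d<..}"
  have "d powr (p+1) \<le> x powr (p+1)" using x assms by (intro powr_mono2) auto
  hence "c * d powr (p+1) * (1/x) \<le> c * x powr (p+1) * (1/x)"
    using x assms by (intro mult_right_mono mult_left_mono) auto
  moreover have "x powr (p+1) * (1/x) = x powr p" using x assms by (simp add: powr_add)
  hence "c * x powr (p+1) * (1/x) = c * x powr p" by (simp only: mult.assoc)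
  moreover have "\<bar>c * d powr (p+1) * (1/x)\<bar> = c * d powr (p+1) * (1/x)" using x assms by auto
  ultimately show "\<bar>c * d powr (p+1) * (1/x)\<bar> \<le> c * x powr p" by (smt (verit))
qed auto

lemma powr_int0:
  assumes "p > -1" "d > 0"
  shows "set_integrable lborel {0<..<d} (\<lambda>x::real. x powr p)"
proof -
  have "(\<lambda>x::real. x powr p) integrable_on {0<..d}"
    by (rule integrable_on_powr_from_0') (use assms in auto)
  hence "(\<lambda>x::real. x powr p) absolutely_integrable_on {0<..d}"
    by (subst absolutely_integrable_on_iff_nonneg) auto
  hence "set_integrable lborel {0<..d} (\<lambda>x::real. x powr p)"
    unfolding set_integrable_def
    by (subst (asm) integrable_completion) (auto simp: set_integrable_def)
  thus ?thesis by (rule set_integrable_subset) auto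
qed



definition TT :: "real \<Rightarrow> real \<Rightarrow> real" where
  "TT a x = (if a = -1 then ln x else x powr (a+1) / (a+1))"

lemma TT_deriv:
  assumes "x > 0" shows "(TT a has_real_derivative x powr a) (at x)"
proof (cases "a = -1")
  case True
  have "TT a = ln" using True by (auto simp: TT_def)
  moreover have "x powr a = 1/x" using True assms by (simp add: powr_minus divide_inverse)
  ultimately show ?thesis using assms by (auto intro!: derivative_eq_intros)
next
  case False
  have "TT a = (\<lambda>x. x powr (a+1) / (a+1))" using False by (auto simp: TT_def)
  moreover have "((\<lambda>x. x powr (a+1) / (a+1)) has_real_derivative ((a+1) * x powr (a+1-1)) / (a+1)) (at x)"
    by (intro DERIV_cdivide has_real_derivative_powr assms)
  moreover have "((a+1) * x powr (a+1-1)) / (a+1) = x powr a"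
    using False by (simp add: add_eq_0_iff2)
  ultimately show ?thesis by metis
qed

lemma pw_facts:
  assumes "x > (0::real)"
  shows "x powr a * x powr a = x powr (2*a)" "x powr (a-1) = x powr a / x"
    "x powr (-a) * x powr a = 1" "x powr (-a) * x powr (2*a) = x powr a"
    "x powr (-a-1) = x powr (-a) / x"
  using assms by (simp_all add: powr_add[symmetric] powr_diff powr_minus field_simps)

lemma sol_cosh: "is_solution a k {0<..} (\<lambda>x. cosh (real_of_int k * TT a x))"
  unfolding is_solution_def
proof (intro exI ballI conjI)
  fix x :: real assume "x \<in> {0<..}"
  hence x: "x > 0" by simp
  let ?k = "real_of_int k"
  show "((\<lambda>x. cosh (?k * TT a x)) has_real_derivative (\<lambda>x. ?k * sinh (?k * TT a x) * x powr a) x) (at x)"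
    using x by (auto intro!: derivative_eq_intros TT_deriv)
  show "((\<lambda>x. ?k * sinh (?k * TT a x) * x powr a) has_real_derivative
     (\<lambda>x. ?k * (cosh (?k * TT a x) * (?k * x powr a) * x powr a + sinh (?k * TT a x) * (a * x powr (a - 1)))) x) (at x)"
    using x by (auto intro!: derivative_eq_intros TT_deriv simp: algebra_simps)
  show "(\<lambda>x. ?k * (cosh (?k * TT a x) * (?k * x powr a) * x powr a + sinh (?k * TT a x) * (a * x powr (a - 1)))) x -
       a / x * (\<lambda>x. ?k * sinh (?k * TT a x) * x powr a) x -
       (real_of_int k)\<^sup>2 * \<bar>x\<bar> powr (2 * a) * cosh (real_of_int k * TT a x) = 0"
    using x pw_facts[OF x, of a] by (simp add: power2_eq_square algebra_simps)
qed

lemma sol_TT: "is_solution a 0 {0<..} (TT a)"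
  unfolding is_solution_def
proof (intro exI ballI conjI)
  fix x :: real assume "x \<in> {0<..}"
  hence x: "x > 0" by simp
  show "(TT a has_real_derivative (\<lambda>x. x powr a) x) (at x)" using TT_deriv[OF x] by simp
  show "((\<lambda>x. x powr a) has_real_derivative (\<lambda>x. a * x powr (a-1)) x) (at x)"
    using x by (auto intro!: derivative_eq_intros)
  show "(\<lambda>x. a * x powr (a-1)) x - a / x * (\<lambda>x. x powr a) x - (real_of_int 0)\<^sup>2 * \<bar>x\<bar> powr (2 * a) * TT a x = 0"
    using x pw_facts[OF x, of a] by simp
qed



lemma const_pos:
  assumes "\<And>x. x > 0 \<Longrightarrow> (f has_real_derivative 0) (at x)"
  shows "\<exists>c. \<forall>x>0. f x = (c::real)"
proof -
  have "\<exists>c. \<forall>x\<in>{0<..}. f x = (c::real)"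
    by (rule has_field_derivative_zero_constant) (auto intro: has_field_derivative_at_within assms)
  thus ?thesis by auto
qed

lemma sol_w:
  assumes "is_solution a k {0<..} u"
  shows "\<exists>w. \<forall>x>0. (u has_real_derivative x powr a * w x) (at x) \<and>
            (w has_real_derivative (real_of_int k)^2 * x powr a * u x) (at x)"
proof -
  obtain u' u'' where H: "\<And>x. x > 0 \<Longrightarrow> (u has_real_derivative u' x) (at x) \<and>
      (u' has_real_derivative u'' x) (at x) \<and>
      u'' x - (a / x) * u' x - (real_of_int k)^2 * \<bar>x\<bar> powr (2 * a) * u x = 0"
    using assms unfolding is_solution_def by auto
  define w where "w x = x powr (-a) * u' x" for x
  show ?thesis
  proof (intro exI allI impI conjI)
    fix x :: real assume x: "x > 0"
    note pf = pw_facts[OF x, of a]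
    have "u' x = x powr a * w x" unfolding w_def using pf(3) by (simp add: algebra_simps)
    thus "(u has_real_derivative x powr a * w x) (at x)" using H[OF x] by simp
    have d: "(w has_real_derivative (-a * x powr (-a-1)) * u' x + x powr (-a) * u'' x) (at x)"
      unfolding w_def[abs_def]
      using x H[OF x] by (auto intro!: derivative_eq_intros)
    have e: "u'' x = (a / x) * u' x + (real_of_int k)^2 * x powr (2 * a) * u x"
      using H[OF x] x by simp
    have "(-a * x powr (-a-1)) * u' x + x powr (-a) * u'' x = (real_of_int k)^2 * x powr a * u x"
      unfolding e using pf x by (simp add: algebra_simps)
    thus "(w has_real_derivative (real_of_int k)^2 * x powr a * u x) (at x)" using d by simp
  qed
qed

lemma rep0:
  assumes "is_solution a 0 {0<..} u"
  shows "\<exists>A B. \<forall>x>0. u x = A + B * TT a x"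
proof -
  obtain w where W: "\<And>x. x>0 \<Longrightarrow> (u has_real_derivative x powr a * w x) (at x) \<and>
            (w has_real_derivative 0) (at x)"
    using sol_w[OF assms] by auto
  obtain B where B: "\<And>x. x>0 \<Longrightarrow> w x = B" using const_pos[of w] W by blast
  have "\<exists>c. \<forall>x>0. (\<lambda>x. u x - B * TT a x) x = c"
  proof (rule const_pos)
    fix x :: real assume x: "x > 0"
    have "((\<lambda>x. u x - B * TT a x) has_real_derivative x powr a * w x - B * x powr a) (at x)"
      using W[OF x] TT_deriv[OF x] by (auto intro!: derivative_eq_intros)
    thus "((\<lambda>x. u x - B * TT a x) has_real_derivative 0) (at x)" using B[OF x] by simp
  qed
  then obtain A where "\<And>x. x>0 \<Longrightarrow> u x - B * TT a x = A" by auto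
  hence "\<forall>x>0. u x = A + B * TT a x" by (metis add_diff_cancel_right' diff_add_cancel add.commute)
  thus ?thesis by blast
qed

lemma repk:
  assumes "is_solution a k {0<..} u" "k \<noteq> 0"
  shows "\<exists>P Q. \<forall>x>0. u x = P * exp (real_of_int k * TT a x) + Q * exp (- (real_of_int k * TT a x))"
proof -
  let ?k = "real_of_int k"
  have k0: "?k \<noteq> 0" using assms by simp
  obtain w where W: "\<And>x. x>0 \<Longrightarrow> (u has_real_derivative x powr a * w x) (at x) \<and>
            (w has_real_derivative ?k^2 * x powr a * u x) (at x)"
    using sol_w[OF assms(1)] by auto
  have "\<exists>c. \<forall>x>0. (\<lambda>x. (u x + w x / ?k) * exp (- (?k * TT a x))) x = c"
  proof (rule const_pos)
    fix x :: real assume x: "x > 0"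
    have "((\<lambda>x. (u x + w x / ?k) * exp (- (?k * TT a x))) has_real_derivative
        (x powr a * w x + ?k^2 * x powr a * u x / ?k) * exp (- (?k * TT a x)) +
        (u x + w x / ?k) * (exp (- (?k * TT a x)) * (- (?k * x powr a)))) (at x)"
      using W[OF x] TT_deriv[OF x] assms(2) by (auto intro!: derivative_eq_intros)
    moreover have "(x powr a * w x + ?k^2 * x powr a * u x / ?k) * exp (- (?k * TT a x)) +
        (u x + w x / ?k) * (exp (- (?k * TT a x)) * (- (?k * x powr a))) = 0"
      using k0 by (simp add: field_simps power2_eq_square)
    ultimately show "((\<lambda>x. (u x + w x / ?k) * exp (- (?k * TT a x))) has_real_derivative 0) (at x)"
      by simp
  qed
  then obtain F where F: "\<And>x. x>0 \<Longrightarrow> (u x + w x / ?k) * exp (- (?k * TT a x)) = F" by auto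
  have "\<exists>c. \<forall>x>0. (\<lambda>x. (u x - w x / ?k) * exp (?k * TT a x)) x = c"
  proof (rule const_pos)
    fix x :: real assume x: "x > 0"
    have "((\<lambda>x. (u x - w x / ?k) * exp (?k * TT a x)) has_real_derivative
        (x powr a * w x - ?k^2 * x powr a * u x / ?k) * exp (?k * TT a x) +
        (u x - w x / ?k) * (exp (?k * TT a x) * (?k * x powr a))) (at x)"
      using W[OF x] TT_deriv[OF x] assms(2) by (auto intro!: derivative_eq_intros)
    moreover have "(x powr a * w x - ?k^2 * x powr a * u x / ?k) * exp (?k * TT a x) +
        (u x - w x / ?k) * (exp (?k * TT a x) * (?k * x powr a)) = 0"
      using k0 by (simp add: field_simps power2_eq_square)
    ultimately show "((\<lambda>x. (u x - w x / ?k) * exp (?k * TT a x)) has_real_derivative 0) (at x)"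
      by simp
  qed
  then obtain G where G: "\<And>x. x>0 \<Longrightarrow> (u x - w x / ?k) * exp (?k * TT a x) = G" by auto
  have "\<forall>x>0. u x = (F/2) * exp (?k * TT a x) + (G/2) * exp (- (?k * TT a x))"
  proof (intro allI impI)
    fix x :: real assume x: "x > 0"
    have "F * exp (?k * TT a x) = u x + w x / ?k"
      using F[OF x, symmetric] by (simp add: mult.assoc exp_minus field_simps)
    moreover have "G * exp (- (?k * TT a x)) = u x - w x / ?k"
      using G[OF x, symmetric] by (simp add: mult.assoc exp_minus field_simps)
    ultimately have "F * exp (?k * TT a x) + G * exp (- (?k * TT a x)) = (u x + w x / ?k) + (u x - w x / ?k)"
      by (simp only:)
    hence "u x = (F * exp (?k * TT a x) + G * exp (- (?k * TT a x))) / 2"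
      by simp
    thus "u x = (F/2) * exp (?k * TT a x) + (G/2) * exp (- (?k * TT a x))"
      by (simp add: add_divide_distrib)
  qed
  thus ?thesis by blast
qed



lemma sol_refl:
  assumes "is_solution a k I u"
  shows "is_solution a k (uminus ` I) (\<lambda>x. u (-x))"
proof -
  obtain u' u'' where H: "\<And>x. x \<in> I \<Longrightarrow> (u has_real_derivative u' x) (at x) \<and>
      (u' has_real_derivative u'' x) (at x) \<and>
      u'' x - (a / x) * u' x - (real_of_int k)^2 * \<bar>x\<bar> powr (2 * a) * u x = 0"
    using assms unfolding is_solution_def by auto
  show ?thesis unfolding is_solution_def
  proof (intro exI ballI conjI)
    fix x assume "x \<in> uminus ` I"
    hence xI: "-x \<in> I" by auto
    note h = H[OF xI]
    show "((\<lambda>x. u (-x)) has_real_derivative (\<lambda>x. - u' (-x)) x) (at x)"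
      using h DERIV_mirror[where f=u and x=x and y="u' (-x)"] by simp
    have "((\<lambda>x. u' (-x)) has_real_derivative - u'' (-x)) (at x)"
      using h DERIV_mirror[where f=u' and x=x and y="u'' (-x)"] by simp
    thus "((\<lambda>x. - u' (-x)) has_real_derivative (\<lambda>x. u'' (-x)) x) (at x)"
      using DERIV_minus by fastforce
    show "(\<lambda>x. u'' (-x)) x - a / x * (\<lambda>x. - u' (-x)) x - (real_of_int k)\<^sup>2 * \<bar>x\<bar> powr (2 * a) * u (- x) = 0"
      using h by simp
  qed
qed

lemma sint_refl:
  fixes f :: "real \<Rightarrow> real"
  shows "set_integrable lborel S f \<longleftrightarrow> set_integrable lborel (uminus ` S) (\<lambda>x. f (-x))"
proof -
  have e: "(\<lambda>x. indicator (uminus ` S) x *\<^sub>R f (-x)) = (\<lambda>x. (\<lambda>y. indicator S y *\<^sub>R f y) (0 + (-1) * x))"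
    by (auto simp: indicator_def image_iff intro!: ext) (metis minus_minus)
  show ?thesis unfolding set_integrable_def e
    by (subst lborel_integrable_real_affine_iff) auto
qed

lemma L2_ZM: "L2_near a ZeroMinus u \<longleftrightarrow> L2_near a ZeroPlus (\<lambda>x. u (-x))"
proof -
  have "L2_near a ZeroMinus u \<longleftrightarrow> (\<exists>d>0. set_integrable lborel {-d<..<0} (\<lambda>x. (u x)^2 * \<bar>x\<bar> powr (- a)))"
    unfolding L2_near_def ep_interval_def by (auto, metis minus_minus neg_0_less_iff_less)
  also have "\<dots> \<longleftrightarrow> (\<exists>d>0. set_integrable lborel {0<..<d} (\<lambda>x. (u (-x))^2 * \<bar>x\<bar> powr (- a)))"
    by (subst sint_refl) simp
  also have "\<dots> \<longleftrightarrow> L2_near a ZeroPlus (\<lambda>x. u (-x))"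
    unfolding L2_near_def ep_interval_def by auto
  finally show ?thesis .
qed

lemma L2_NI: "L2_near a NegInf u \<longleftrightarrow> L2_near a PosInf (\<lambda>x. u (-x))"
proof -
  have "L2_near a NegInf u \<longleftrightarrow> (\<exists>d>0. set_integrable lborel {..<-d} (\<lambda>x. (u x)^2 * \<bar>x\<bar> powr (- a)))"
    unfolding L2_near_def ep_interval_def by (auto, metis minus_minus neg_0_less_iff_less)
  also have "\<dots> \<longleftrightarrow> (\<exists>d>0. set_integrable lborel {d<..} (\<lambda>x. (u (-x))^2 * \<bar>x\<bar> powr (- a)))"
    by (subst sint_refl) simp
  also have "\<dots> \<longleftrightarrow> L2_near a PosInf (\<lambda>x. u (-x))"
    unfolding L2_near_def ep_interval_def by auto
  finally show ?thesis .
qed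

lemma LC_ZM: "limit_circle a k ZeroPlus \<Longrightarrow> limit_circle a k ZeroMinus"
  unfolding limit_circle_def
proof (intro allI impI)
  fix u assume LC: "\<forall>u. is_solution a k (ep_interval ZeroPlus) u \<longrightarrow> L2_near a ZeroPlus u"
    and S: "is_solution a k (ep_interval ZeroMinus) u"
  have "is_solution a k (ep_interval ZeroPlus) (\<lambda>x. u (-x))"
    using sol_refl[OF S] by (simp add: ep_interval_def)
  thus "L2_near a ZeroMinus u" using LC L2_ZM by blast
qed

lemma LP_ZM: "limit_point a k ZeroPlus \<Longrightarrow> limit_point a k ZeroMinus"
  unfolding limit_point_def
proof
  assume P: "\<not> limit_circle a k ZeroPlus" and LC: "limit_circle a k ZeroMinus"
  obtain v where S: "is_solution a k (ep_interval ZeroPlus) v" and N: "\<not> L2_near a ZeroPlus v"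
    using P unfolding limit_circle_def by blast
  have "is_solution a k (ep_interval ZeroMinus) (\<lambda>x. v (-x))"
    using sol_refl[OF S] by (simp add: ep_interval_def)
  hence "L2_near a ZeroMinus (\<lambda>x. v (-x))" using LC unfolding limit_circle_def by blast
  thus False using N L2_ZM by simp
qed

lemma LP_NI: "limit_point a k PosInf \<Longrightarrow> limit_point a k NegInf"
  unfolding limit_point_def
proof
  assume P: "\<not> limit_circle a k PosInf" and LC: "limit_circle a k NegInf"
  obtain v where S: "is_solution a k (ep_interval PosInf) v" and N: "\<not> L2_near a PosInf v"
    using P unfolding limit_circle_def by blast
  have "is_solution a k (ep_interval NegInf) (\<lambda>x. v (-x))"
    using sol_refl[OF S] by (simp add: ep_interval_def)
  hence "L2_near a NegInf (\<lambda>x. v (-x))" using LC unfolding limit_circle_def by blast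
  thus False using N L2_NI by simp
qed



lemma cosh_exp_bound: "exp \<bar>y\<bar> / 2 \<le> cosh (y::real)"
proof -
  have "cosh y = (exp y + exp (-y)) / 2" by (simp add: cosh_def)
  moreover have "exp \<bar>y\<bar> \<le> exp y + exp (-y)"
    by (cases "y \<ge> 0") (auto simp: add_increasing2 add_increasing)
  ultimately show ?thesis by simp
qed

lemma exp_ge_2x: "z \<ge> 0 \<Longrightarrow> 2 * z \<le> exp (z::real)"
proof -
  assume z: "z \<ge> 0"
  have "1 + z/2 \<le> exp (z/2)" by (rule exp_ge_add_one_self)
  hence "(1 + z/2)^2 \<le> exp (z/2) ^2" using z by (intro power_mono) auto
  also have "exp (z/2)^2 = exp z" by (simp add: power2_eq_square exp_add[symmetric])
  finally have "(1 + z/2)^2 \<le> exp z" .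
  moreover have "(1 + z/2)^2 - 2 * z = (1 - z/2)^2" by (simp add: power2_eq_square algebra_simps)
  hence "2 * z \<le> (1 + z/2)^2" by (smt (verit) zero_le_power2)
  ultimately show ?thesis by linarith
qed

lemma cosh_ge_abs: "\<bar>y\<bar> \<le> cosh (y::real)"
  using cosh_exp_bound[of y] exp_ge_2x[of "\<bar>y\<bar>"] by simp

lemma cosh_ge_1': "1 \<le> cosh (y::real)"
proof -
  have "1 \<le> exp \<bar>y\<bar>" by simp
  have "cosh y = (exp y + exp (-y)) / 2" by (simp add: cosh_def)
  moreover have "2 \<le> exp y + exp (-y)"
  proof -
    have "exp y * exp (-y) = 1" by (simp add: exp_add[symmetric])
    moreover have "(exp y - 1) * (exp (-y) - 1) \<le> 0"
      by (cases "y \<ge> 0") (auto intro: mult_nonneg_nonpos mult_nonpos_nonneg)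
    ultimately show ?thesis by (simp add: algebra_simps)
  qed
  ultimately show ?thesis by simp
qed

lemma int_abs_ge1: "k \<noteq> 0 \<Longrightarrow> \<bar>y\<bar> \<le> \<bar>real_of_int k * y\<bar>"
proof -
  assume "k \<noteq> 0"
  hence "1 \<le> \<bar>real_of_int k\<bar>" by linarith
  thus ?thesis by (simp add: abs_mult mult_le_cancel_right1)
qed

lemma exp_ge_powr: "y > 0 \<Longrightarrow> m > 0 \<Longrightarrow> (y/m) powr m \<le> exp (y::real)"
proof -
  assume y: "y > 0" and m: "m > 0"
  have "y/m \<le> exp (y/m)" using exp_ge_add_one_self[of "y/m"] by linarith
  hence "(y/m) powr m \<le> exp (y/m) powr m" using y m by (intro powr_mono2) auto
  also have "exp (y/m) powr m = exp y" using m by (simp add: powr_def)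
  finally show ?thesis .
qed



lemma sol_cont: "is_solution a k {0<..} u \<Longrightarrow> continuous_on {0<..} u"
proof -
  assume "is_solution a k {0<..} u"
  then obtain u' where "\<And>x. x \<in> {0<..} \<Longrightarrow> (u has_real_derivative u' x) (at x)"
    unfolding is_solution_def by blast
  thus ?thesis by (intro continuous_at_imp_continuous_on ballI) (metis DERIV_isCont)
qed

lemma f_cont:
  assumes "is_solution a k {0<..} u" "S \<subseteq> {0<..}"
  shows "continuous_on S (\<lambda>x. (u x)^2 * \<bar>x\<bar> powr (- a))"
proof -
  have "continuous_on S u" using sol_cont[OF assms(1)] assms(2) continuous_on_subset by blast
  thus ?thesis using assms(2) by (auto intro!: continuous_intros)
qed

lemma ln_sq_bound: "0 < (x::real) \<Longrightarrow> x < 1 \<Longrightarrow> x * (ln x)^2 \<le> 4"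
proof -
  assume x: "0 < x" "x < 1"
  have "ln (x powr (-1/2)) < x powr (-1/2)" using x by (intro ln_less_self) auto
  hence "- ln x / 2 < x powr (-1/2)" using x by (simp add: ln_powr)
  moreover have "ln x < 0" using x by simp
  ultimately have "(- ln x / 2)^2 \<le> (x powr (-1/2))^2" by (intro power_mono) auto
  also have "(x powr (-1/2))^2 = 1/x"
  proof -
    have "(x powr (-1/2))^2 = x powr (-1/2 + -1/2)" by (simp only: power2_eq_square powr_add)
    also have "\<dots> = x powr (- 1)" by simp
    also have "\<dots> = 1/x" using x by (simp add: powr_minus_divide)
    finally show ?thesis .
  qed
  finally have h: "(- ln x / 2)^2 \<le> 1/x" .
  have "(- ln x / 2)^2 = (ln x)^2 / 4" by (simp add: power2_eq_square)
  with h have "(ln x)^2 / 4 \<le> 1/x" by simp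
  hence "x * ((ln x)^2 / 4) \<le> x * (1/x)" using x by (intro mult_left_mono) auto
  moreover have "x * (1/x) = 1" using x by simp
  moreover have "x * ((ln x)^2 / 4) = (x * (ln x)^2) / 4" by simp
  ultimately show ?thesis by linarith
qed

lemma LC_ZP_0:
  assumes "-3 < a" "a < 1"
  shows "limit_circle a 0 ZeroPlus"
  unfolding limit_circle_def
proof (intro allI impI)
  fix u assume S': "is_solution a 0 (ep_interval ZeroPlus) u"
  hence S: "is_solution a 0 {0<..} u" by (simp add: ep_interval_def)
  obtain A B where R: "\<And>x. x > 0 \<Longrightarrow> u x = A + B * TT a x" using rep0[OF S] by blast
  have "set_integrable lborel {0<..<1} (\<lambda>x. (u x)^2 * \<bar>x\<bar> powr (- a))"
  proof (cases "a = -1")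
    case True
    show ?thesis
    proof (rule int_bound[where g = "\<lambda>x. (2*A^2 + 8*B^2) * x powr 0"])
      show "set_integrable lborel {0<..<1} (\<lambda>x::real. (2*A^2 + 8*B^2) * x powr 0)"
        using powr_int0[of 0 1] by simp
      show "continuous_on {0<..<1} (\<lambda>x. (u x)^2 * \<bar>x\<bar> powr (- a))"
        by (rule f_cont[OF S]) auto
      fix x :: real assume x: "x \<in> {0<..<1}"
      have e: "(u x)^2 * \<bar>x\<bar> powr (- a) = x * (A + B * ln x)^2"
        using x True R[of x] by (simp add: TT_def)
      have "2 * A^2 + 2 * B^2 * (ln x)^2 - (A + B * ln x)^2 = (A - B * ln x)^2"
        by (simp add: power2_eq_square algebra_simps)
      hence "(A + B * ln x)^2 \<le> 2 * A^2 + 2 * B^2 * (ln x)^2"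
        by (smt (verit) zero_le_power2)
      hence "x * (A + B * ln x)^2 \<le> x * (2 * A^2 + 2 * B^2 * (ln x)^2)"
        using x by (intro mult_left_mono) auto
      also have "\<dots> = x * (2 * A^2) + 2 * B^2 * (x * (ln x)^2)" by (simp add: algebra_simps)
      also have "\<dots> \<le> 2 * A^2 + 2 * B^2 * 4"
        using x ln_sq_bound[of x] by (intro add_mono mult_left_mono) (auto simp: mult_le_cancel_right1 mult_left_le_one_le)
      finally show "\<bar>(u x)^2 * \<bar>x\<bar> powr (- a)\<bar> \<le> (2*A^2 + 8*B^2) * x powr 0"
        using x e by simp
    qed auto
  next
    case False
    show ?thesis
    proof (rule int_bound[where g = "\<lambda>x. 2*A^2 * x powr (-a) + 2*B^2/(a+1)^2 * x powr (a+2)"])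
      show "set_integrable lborel {0<..<1} (\<lambda>x::real. 2*A^2 * x powr (-a) + 2*B^2/(a+1)^2 * x powr (a+2))"
        using powr_int0[of "-a" 1] powr_int0[of "a+2" 1] assms
        by (intro set_integral_add(1) set_integrable_mult_right) auto
      show "continuous_on {0<..<1} (\<lambda>x. (u x)^2 * \<bar>x\<bar> powr (- a))"
        by (rule f_cont[OF S]) auto
      fix x :: real assume x: "x \<in> {0<..<1}"
      have t: "(TT a x)^2 * x powr (-a) = x powr (a+2) / (a+1)^2"
        using False x by (simp add: TT_def power2_eq_square powr_add[symmetric] field_simps)
      have "2 * A^2 + 2 * B^2 * (TT a x)^2 - (A + B * TT a x)^2 = (A - B * TT a x)^2"
        by (simp add: power2_eq_square algebra_simps)
      hence "(A + B * TT a x)^2 \<le> 2 * A^2 + 2 * B^2 * (TT a x)^2"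
        by (smt (verit) zero_le_power2)
      hence "(A + B * TT a x)^2 * x powr (-a) \<le> (2 * A^2 + 2 * B^2 * (TT a x)^2) * x powr (-a)"
        by (intro mult_right_mono) auto
      also have "\<dots> = 2*A^2 * x powr (-a) + 2*B^2 * ((TT a x)^2 * x powr (-a))"
        by (simp add: algebra_simps)
      also have "\<dots> = 2*A^2 * x powr (-a) + 2*B^2/(a+1)^2 * x powr (a+2)"
        unfolding t by simp
      finally show "\<bar>(u x)^2 * \<bar>x\<bar> powr (- a)\<bar> \<le> 2*A^2 * x powr (-a) + 2*B^2/(a+1)^2 * x powr (a+2)"
        using x R[of x] by simp
    qed auto
  qed
  thus "L2_near a ZeroPlus u" unfolding L2_near_def ep_interval_def by force
qed

lemma LC_ZP_k:
  assumes "-1 < a" "a < 1" "k \<noteq> 0"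
  shows "limit_circle a k ZeroPlus"
  unfolding limit_circle_def
proof (intro allI impI)
  fix u assume S': "is_solution a k (ep_interval ZeroPlus) u"
  hence S: "is_solution a k {0<..} u" by (simp add: ep_interval_def)
  let ?k = "real_of_int k"
  obtain P Q where R: "\<And>x. x > 0 \<Longrightarrow> u x = P * exp (?k * TT a x) + Q * exp (- (?k * TT a x))"
    using repk[OF S assms(3)] by blast
  define M where "M = \<bar>?k\<bar> / (a+1)"
  define C where "C = (\<bar>P\<bar> + \<bar>Q\<bar>) * exp M"
  have "set_integrable lborel {0<..<1} (\<lambda>x. (u x)^2 * \<bar>x\<bar> powr (- a))"
  proof (rule int_bound[where g = "\<lambda>x. C^2 * x powr (-a)"])
    show "set_integrable lborel {0<..<1} (\<lambda>x::real. C^2 * x powr (-a))"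
      using powr_int0[of "-a" 1] assms by auto
    show "continuous_on {0<..<1} (\<lambda>x. (u x)^2 * \<bar>x\<bar> powr (- a))"
      by (rule f_cont[OF S]) auto
    fix x :: real assume x: "x \<in> {0<..<1}"
    have "x powr (a+1) \<le> 1" using x assms by (intro powr_le1) auto
    hence "\<bar>TT a x\<bar> \<le> 1 / (a+1)" using x assms by (auto simp: TT_def divide_right_mono)
    hence kt: "\<bar>?k * TT a x\<bar> \<le> M" unfolding M_def using assms
      by (simp add: abs_mult) (metis mult_left_mono abs_ge_zero times_divide_eq_right mult_1_right)
    have "exp (?k * TT a x) \<le> exp M" "exp (- (?k * TT a x)) \<le> exp M" using kt by auto
    hence "\<bar>u x\<bar> \<le> \<bar>P\<bar> * exp M + \<bar>Q\<bar> * exp M"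
      using R[of x] x
      by (auto simp: abs_mult intro!: order_trans[OF abs_triangle_ineq] add_mono mult_left_mono)
    hence ub: "\<bar>u x\<bar> \<le> C" unfolding C_def by (simp add: algebra_simps)
    hence "(u x)^2 \<le> C^2" by (metis abs_ge_zero power2_abs power_mono)
    hence "(u x)^2 * x powr (-a) \<le> C^2 * x powr (-a)" by (intro mult_right_mono) auto
    thus "\<bar>(u x)^2 * \<bar>x\<bar> powr (- a)\<bar> \<le> C^2 * x powr (-a)" using x by simp
  qed auto
  thus "L2_near a ZeroPlus u" unfolding L2_near_def ep_interval_def by force
qed



lemma TT_sq: "a \<noteq> -1 \<Longrightarrow> x > 0 \<Longrightarrow> (TT a x)^2 * x powr (-a) = 1/(a+1)^2 * x powr (a+2)"
  by (simp add: TT_def power2_eq_square powr_add[symmetric] field_simps)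

lemma LP_ZP_bound:
  assumes S: "is_solution a k {0<..} v" and c: "c > 0" "p \<le> -1"
    and B: "\<And>x. x > 0 \<Longrightarrow> c * x powr p \<le> (v x)^2 * x powr (-a)"
  shows "limit_point a k ZeroPlus"
  unfolding limit_point_def limit_circle_def
proof
  assume "\<forall>u. is_solution a k (ep_interval ZeroPlus) u \<longrightarrow> L2_near a ZeroPlus u"
  hence "L2_near a ZeroPlus v" using S by (simp add: ep_interval_def)
  then obtain d where d: "d > 0" and I: "set_integrable lborel {0<..<d} (\<lambda>x. (v x)^2 * \<bar>x\<bar> powr (- a))"
    unfolding L2_near_def ep_interval_def by auto
  have "\<not> set_integrable lborel {0<..<d} (\<lambda>x. (v x)^2 * \<bar>x\<bar> powr (- a))"
  proof (rule not_int_bound[where g = "\<lambda>x. c * x powr p"])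
    show "\<not> set_integrable lborel {0<..<d} (\<lambda>x. c * x powr p)" by (rule powr_not_int0) (use c d in auto)
    show "continuous_on {0<..<d} (\<lambda>x. c * x powr p)" by (intro continuous_intros) auto
    fix x :: real assume x: "x \<in> {0<..<d}"
    thus "\<bar>c * x powr p\<bar> \<le> (v x)^2 * \<bar>x\<bar> powr (- a)" using B[of x] c by simp
  qed auto
  thus False using I by blast
qed

lemma LP_PI_bound:
  assumes S: "is_solution a k {0<..} v" and c: "c > 0" "p \<ge> -1"
    and B: "\<And>x. x > 0 \<Longrightarrow> c * x powr p \<le> (v x)^2 * x powr (-a)"
  shows "limit_point a k PosInf"
  unfolding limit_point_def limit_circle_def
proof
  assume "\<forall>u. is_solution a k (ep_interval PosInf) u \<longrightarrow> L2_near a PosInf u"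
  hence "L2_near a PosInf v" using S by (simp add: ep_interval_def)
  then obtain d where d: "d > 0" and I: "set_integrable lborel {d<..} (\<lambda>x. (v x)^2 * \<bar>x\<bar> powr (- a))"
    unfolding L2_near_def ep_interval_def by auto
  have "\<not> set_integrable lborel {d<..} (\<lambda>x. (v x)^2 * \<bar>x\<bar> powr (- a))"
  proof (rule not_int_bound[where g = "\<lambda>x. c * x powr p"])
    show "\<not> set_integrable lborel {d<..} (\<lambda>x. c * x powr p)" by (rule powr_not_int_inf) (use c d in auto)
    show "continuous_on {d<..} (\<lambda>x. c * x powr p)" using d by (intro continuous_intros) auto
    fix x :: real assume x: "x \<in> {d<..}"
    thus "\<bar>c * x powr p\<bar> \<le> (v x)^2 * \<bar>x\<bar> powr (- a)" using B[of x] c d by simp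
  qed auto
  thus False using I by blast
qed

lemma W1: "1 \<le> (cosh (y::real))^2"
  using cosh_ge_1'[of y] by (metis one_le_power)

lemma W1b: "(x::real) > 0 \<Longrightarrow> 1 * x powr (-a) \<le> (cosh (y::real))^2 * x powr (-a)"
  using W1[of y] by (intro mult_right_mono) auto

lemma W2: "\<exists>v. is_solution a k {0<..} v \<and> (\<forall>x>0. (TT a x)^2 \<le> (v x)^2)"
proof (cases "k = 0")
  case True
  thus ?thesis using sol_TT by blast
next
  case False
  have "\<forall>x>0. (TT a x)^2 \<le> (cosh (real_of_int k * TT a x))^2"
  proof (intro allI impI)
    fix x :: real
    have "\<bar>TT a x\<bar> \<le> cosh (real_of_int k * TT a x)"
      using int_abs_ge1[OF False, of "TT a x"] cosh_ge_abs[of "real_of_int k * TT a x"] by linarith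
    thus "(TT a x)^2 \<le> (cosh (real_of_int k * TT a x))^2"
      by (metis abs_ge_zero power2_abs power_mono)
  qed
  thus ?thesis using sol_cosh by blast
qed

lemma W2b:
  assumes "a \<noteq> -1"
  shows "\<exists>v. is_solution a k {0<..} v \<and> (\<forall>x>0. 1/(a+1)^2 * x powr (a+2) \<le> (v x)^2 * x powr (-a))"
proof -
  obtain v where v: "is_solution a k {0<..} v" "\<forall>x>0. (TT a x)^2 \<le> (v x)^2" using W2 by blast
  have "\<forall>x>0. 1/(a+1)^2 * x powr (a+2) \<le> (v x)^2 * x powr (-a)"
  proof (intro allI impI)
    fix x :: real assume x: "x > 0"
    have "(TT a x)^2 * x powr (-a) \<le> (v x)^2 * x powr (-a)" using v(2) x by (intro mult_right_mono) auto
    thus "1/(a+1)^2 * x powr (a+2) \<le> (v x)^2 * x powr (-a)" using TT_sq[OF assms x] by simp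
  qed
  thus ?thesis using v(1) by blast
qed

lemma W3:
  assumes "k \<noteq> 0"
  shows "(exp \<bar>y\<bar>)^2 / 4 \<le> (cosh (real_of_int k * y))^2"
proof -
  have "exp \<bar>y\<bar> \<le> exp \<bar>real_of_int k * y\<bar>" using int_abs_ge1[OF assms] by simp
  hence "exp \<bar>y\<bar> / 2 \<le> cosh (real_of_int k * y)" using cosh_exp_bound[of "real_of_int k * y"] by linarith
  hence "(exp \<bar>y\<bar> / 2)^2 \<le> (cosh (real_of_int k * y))^2" by (intro power_mono) auto
  thus ?thesis by (simp add: power_divide)
qed



lemma LP_ZP_mid:
  assumes "-3 < a" "a \<le> -1" "k \<noteq> 0"
  shows "limit_point a k ZeroPlus"
proof (cases "a = -1")
  case True
  show ?thesis
  proof (rule LP_ZP_bound[OF sol_cosh, of "1/4" "-1"])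
    fix x :: real assume x: "x > 0"
    have "exp (- ln x) \<le> exp \<bar>ln x\<bar>" by simp
    hence "1/x \<le> exp \<bar>ln x\<bar>" using x by (simp add: exp_minus exp_ln divide_inverse)
    hence "(1/x)^2 \<le> (exp \<bar>ln x\<bar>)^2" using x by (intro power_mono) auto
    hence "(1/x)^2 / 4 \<le> (cosh (real_of_int k * TT a x))^2"
      using W3[OF assms(3), of "ln x"] True by (simp add: TT_def)
    hence L: "(1/x)^2 / 4 * x \<le> (cosh (real_of_int k * TT a x))^2 * x" using x by (intro mult_right_mono) auto
    have eq: "(1/x)^2 / 4 * x = 1/4 * x powr -1" using x
      by (simp add: power2_eq_square powr_minus field_simps)
    have pw: "x powr (-a) = x" using True x by simp
    show "1/4 * x powr -1 \<le> (cosh (real_of_int k * TT a x))^2 * x powr (-a)"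
      unfolding pw eq[symmetric] by (rule L)
  qed auto
next
  case False
  define b where "b = -(a+1)"
  have b: "b > 0" "b < 2" using False assms unfolding b_def by auto
  define m where "m = (2+b)/(2*b)"
  have m: "m > 0" using b unfolding m_def by auto
  define K where "K = (b*m) powr (2*m)"
  have K: "K > 0" using b m unfolding K_def by auto
  show ?thesis
  proof (rule LP_ZP_bound[OF sol_cosh, of "1/(4*K)" "-1"])
    fix x :: real assume x: "x > 0"
    define y where "y = x powr (-b) / b"
    have y: "y > 0" using x b unfolding y_def by auto
    have Ty: "\<bar>TT a x\<bar> = y"
      using False x b unfolding y_def b_def TT_def by (simp add: abs_divide abs_minus_cancel add.commute)
    have "(y/m) powr m \<le> exp y" by (rule exp_ge_powr[OF y m])
    hence "((y/m) powr m)^2 \<le> (exp y)^2" using y m by (intro power_mono) auto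
    also have "((y/m) powr m)^2 = (y/m) powr (2*m)"
      by (simp add: power2_eq_square powr_add[symmetric])
    also have "y/m = x powr (-b) / (b*m)" unfolding y_def by simp
    also have "(x powr (-b) / (b*m)) powr (2*m) = x powr (-b*(2*m)) / K"
      unfolding K_def using x b m by (simp add: powr_divide powr_powr)
    also have "-b*(2*m) = -(2+b)" unfolding m_def using b by (simp add: field_simps)
    finally have e1: "x powr (-(2+b)) / K \<le> (exp \<bar>TT a x\<bar>)^2" using Ty by simp
    have "x powr (-(2+b)) / K / 4 \<le> (cosh (real_of_int k * TT a x))^2"
      using divide_right_mono[OF e1, of 4] W3[OF assms(3), of "TT a x"] by (rule order_trans) simp
    hence "x powr (-(2+b)) / K / 4 * x powr (-a) \<le> (cosh (real_of_int k * TT a x))^2 * x powr (-a)"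
      by (intro mult_right_mono) auto
    moreover have "x powr (-(2+b)) / K / 4 * x powr (-a) = 1/(4*K) * x powr -1"
    proof -
      have "-a = 1 + b" unfolding b_def by simp
      hence "x powr (-(2+b)) * x powr (-a) = x powr -1" by (simp add: powr_add[symmetric])
      thus ?thesis by (simp add: field_simps)
    qed
    ultimately show "1/(4*K) * x powr -1 \<le> (cosh (real_of_int k * TT a x))^2 * x powr (-a)" by simp
  qed (use K in auto)
qed



lemma PI_all: "limit_point a k PosInf"
proof (cases "a \<le> 1")
  case True
  show ?thesis by (rule LP_PI_bound[OF sol_cosh, of 1 "-a"]) (use True W1b in auto)
next
  case False
  hence "a \<noteq> -1" by auto
  then obtain v where v: "is_solution a k {0<..} v" "\<forall>x>0. 1/(a+1)^2 * x powr (a+2) \<le> (v x)^2 * x powr (-a)"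
    using W2b by blast
  show ?thesis by (rule LP_PI_bound[OF v(1), of "1/(a+1)^2" "a+2"]) (use False v(2) in auto)
qed

lemma ZP_out: "a \<le> -3 \<or> a \<ge> 1 \<Longrightarrow> limit_point a k ZeroPlus"
proof (cases "a \<ge> 1")
  case True
  show ?thesis by (rule LP_ZP_bound[OF sol_cosh, of 1 "-a"]) (use True W1b in auto)
next
  case False
  assume "a \<le> -3 \<or> a \<ge> 1"
  hence a: "a \<le> -3" using False by auto
  hence "a \<noteq> -1" by auto
  then obtain v where v: "is_solution a k {0<..} v" "\<forall>x>0. 1/(a+1)^2 * x powr (a+2) \<le> (v x)^2 * x powr (-a)"
    using W2b by blast
  show ?thesis by (rule LP_ZP_bound[OF v(1), of "1/(a+1)^2" "a+2"]) (use a v(2) in auto)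
qed

theorem mainTheorem7:
  fixes \<alpha> :: real and k :: int
  shows "(limit_point \<alpha> k PosInf \<and> limit_point \<alpha> k NegInf)
    \<and> ((\<alpha> \<le> -3 \<or> \<alpha> \<ge> 1) \<longrightarrow> limit_point \<alpha> k ZeroPlus \<and> limit_point \<alpha> k ZeroMinus)
    \<and> ((-3 < \<alpha> \<and> \<alpha> \<le> -1) \<longrightarrow>
          (k = 0 \<longrightarrow> limit_circle \<alpha> k ZeroPlus \<and> limit_circle \<alpha> k ZeroMinus)
        \<and> (k \<noteq> 0 \<longrightarrow> limit_point \<alpha> k ZeroPlus \<and> limit_point \<alpha> k ZeroMinus))
    \<and> ((-1 < \<alpha> \<and> \<alpha> < 1) \<longrightarrow> limit_circle \<alpha> k ZeroPlus \<and> limit_circle \<alpha> k ZeroMinus)"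
proof (intro conjI impI)
  show "limit_point \<alpha> k PosInf" by (rule PI_all)
  show "limit_point \<alpha> k NegInf" by (rule LP_NI[OF PI_all])
  assume "\<alpha> \<le> -3 \<or> \<alpha> \<ge> 1"
  thus "limit_point \<alpha> k ZeroPlus" by (rule ZP_out)
  thus "limit_point \<alpha> k ZeroMinus" by (rule LP_ZM)
next
  assume a: "-3 < \<alpha> \<and> \<alpha> \<le> -1" "k = 0"
  thus "limit_circle \<alpha> k ZeroPlus" using LC_ZP_0[of \<alpha>] by auto
  thus "limit_circle \<alpha> k ZeroMinus" by (rule LC_ZM)
next
  assume a: "-3 < \<alpha> \<and> \<alpha> \<le> -1" "k \<noteq> 0"
  thus "limit_point \<alpha> k ZeroPlus" using LP_ZP_mid[of \<alpha> k] by auto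
  thus "limit_point \<alpha> k ZeroMinus" by (rule LP_ZM)
next
  assume a: "-1 < \<alpha> \<and> \<alpha> < 1"
  show "limit_circle \<alpha> k ZeroPlus"
  proof (cases "k = 0")
    case True thus ?thesis using LC_ZP_0[of \<alpha>] a by auto
  next
    case False thus ?thesis using LC_ZP_k[of \<alpha> k] a by auto
  qed
  thus "limit_circle \<alpha> k ZeroMinus" by (rule LC_ZM)
qed

end
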